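(* Let $G$ be a simple graph whose edges are colored red and blue, and let $C_1$ and $C_2$ be two vertex-disjoint alternating cycles in $G$. If there is a good pair of edges between $C_1$ and $C_2$, then $G$ contains an alternating cycle whose vertex set is exactly $V(C_1)\cup V(C_2)$.
   Context: An alternating cycle (path) in a 2-edge-colored graph is a cycle (path) in which any two consecutive edges have different colors. For a vertex $v$ on an alternating cycle $C$, $v^r$ (resp. $v^b$) denotes the neighbor of $v$ on $C$ such that the edge $vv^r$ of $C$ is red (resp. $vv^b$ is blue). Given two vertex-disjoint alternating cycles $C_1,C_2$ and an edge $vw\in E(G)$ with $v\in V(C_1)$, $w\in V(C_2)$: if $vw$ is red, the pair $vw, v^rw^r$ is a good pair of edges when $v^rw^r$ is an edge of $G$ colored red (here $v^r$ taken on $C_1$, $w^r$ on $C_2$); if $vw$ is blue, the pair $vw, v^bw^b$ is a good pair of edges when $v^bw^b$ is an edge of $G$ colored blue. "There is a good pair between $C_1$ and $C_2$" means some such good pair of edges exists. *)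

theory Defs
  imports Main
begin

datatype color = Red | Blue

definition simple_graph :: "('a \<Rightarrow> 'a \<Rightarrow> bool) \<Rightarrow> bool" where
  "simple_graph E \<longleftrightarrow> (\<forall>u v. E u v \<longrightarrow> E v u) \<and> (\<forall>v. \<not> E v v)"

definition edge_coloring :: "('a \<Rightarrow> 'a \<Rightarrow> bool) \<Rightarrow> ('a \<Rightarrow> 'a \<Rightarrow> color) \<Rightarrow> bool" where
  "edge_coloring E col \<longleftrightarrow> (\<forall>u v. E u v \<longrightarrow> col u v = col v u)"

definition is_cycle :: "('a \<Rightarrow> 'a \<Rightarrow> bool) \<Rightarrow> 'a list \<Rightarrow> bool" where
  "is_cycle E C \<longleftrightarrow> length C \<ge> 3 \<and> distinct C \<and>
     (\<forall>i < length C. E (C ! i) (C ! ((i + 1) mod length C)))"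

definition alt_cycle :: "('a \<Rightarrow> 'a \<Rightarrow> bool) \<Rightarrow> ('a \<Rightarrow> 'a \<Rightarrow> color) \<Rightarrow> 'a list \<Rightarrow> bool" where
  "alt_cycle E col C \<longleftrightarrow> is_cycle E C \<and>
     (\<forall>i < length C. col (C ! i) (C ! ((i + 1) mod length C))
        \<noteq> col (C ! ((i + 1) mod length C)) (C ! ((i + 2) mod length C)))"

definition cyc_nbr :: "'a list \<Rightarrow> 'a \<Rightarrow> 'a \<Rightarrow> bool" where
  "cyc_nbr C v u \<longleftrightarrow> (\<exists>i < length C.
     (C ! i = v \<and> C ! ((i + 1) mod length C) = u) \<or>
     (C ! i = u \<and> C ! ((i + 1) mod length C) = v))"

definition cyc_nbr_col :: "('a \<Rightarrow> 'a \<Rightarrow> color) \<Rightarrow> 'a list \<Rightarrow> 'a \<Rightarrow> color \<Rightarrow> 'a \<Rightarrow> bool" where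
  "cyc_nbr_col col C v c u \<longleftrightarrow> cyc_nbr C v u \<and> col v u = c"

definition good_pair :: "('a \<Rightarrow> 'a \<Rightarrow> bool) \<Rightarrow> ('a \<Rightarrow> 'a \<Rightarrow> color) \<Rightarrow> 'a list \<Rightarrow> 'a list \<Rightarrow> bool" where
  "good_pair E col C1 C2 \<longleftrightarrow> (\<exists>v w. v \<in> set C1 \<and> w \<in> set C2 \<and> E v w \<and>
     ((col v w = Red \<and> (\<exists>vr wr. cyc_nbr_col col C1 v Red vr \<and> cyc_nbr_col col C2 w Red wr
          \<and> E vr wr \<and> col vr wr = Red)) \<or>
      (col v w = Blue \<and> (\<exists>vb wb. cyc_nbr_col col C1 v Blue vb \<and> cyc_nbr_col col C2 w Blue wb
          \<and> E vb wb \<and> col vb wb = Blue))))"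

end

theory Submission imports Defs begin

definition ec :: "('a \<Rightarrow> 'a \<Rightarrow> color) \<Rightarrow> 'a list \<Rightarrow> nat \<Rightarrow> color" where
  "ec col C i = col (C ! i) (C ! (Suc i mod length C))"

lemma mod2: "Suc (Suc i) mod n = Suc (Suc i mod n) mod n"
  by (simp add: mod_Suc_eq)

lemma alt_iff: "alt_cycle E col C \<longleftrightarrow> length C \<ge> 3 \<and> distinct C \<and>
  (\<forall>i < length C. E (C ! i) (C ! (Suc i mod length C)) \<and>
      ec col C i \<noteq> ec col C (Suc i mod length C))"
  unfolding alt_cycle_def is_cycle_def ec_def
  by (auto simp: mod2)

lemma rot:
  assumes "alt_cycle E col C"
  shows "alt_cycle E col (rotate k C)"
proof -
  let ?n = "length C"
  let ?D = "rotate k C"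
  from assms have n: "?n \<ge> 3" and d: "distinct C" and
    h: "\<And>i. i < ?n \<Longrightarrow> E (C ! i) (C ! (Suc i mod ?n)) \<and> ec col C i \<noteq> ec col C (Suc i mod ?n)"
    unfolding alt_iff by auto
  have n0: "0 < ?n" using n by linarith
  have nth: "?D ! i = C ! ((k + i) mod ?n)" if "i < ?n" for i
    using that by (simp add: nth_rotate)
  have s: "(k + Suc i mod ?n) mod ?n = Suc ((k + i) mod ?n) mod ?n" for i
    by (metis add_Suc_right mod_Suc_eq mod_add_right_eq)
  have nth2: "?D ! (Suc i mod ?n) = C ! (Suc ((k + i) mod ?n) mod ?n)" for i
  proof -
    have "Suc i mod ?n < ?n" using n by (intro mod_less_divisor) linarith
    then show ?thesis by (simp add: nth s)
  qed
  have ecD: "ec col ?D i = ec col C ((k + i) mod ?n)" if "i < ?n" for i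
    using that nth nth2 unfolding ec_def by simp
  show ?thesis unfolding alt_iff
  proof (intro conjI allI impI)
    fix i assume i: "i < length ?D"
    hence i': "i < ?n" by simp
    have m: "(k + i) mod ?n < ?n" using n by (intro mod_less_divisor) linarith
    show "E (?D ! i) (?D ! (Suc i mod length ?D))"
      using h[OF m] nth[OF i'] nth2[of i] by simp
    have "ec col ?D (Suc i mod ?n) = ec col C (Suc ((k + i) mod ?n) mod ?n)"
      using n0 ecD[of "Suc i mod ?n"] s by simp
    then show "ec col ?D i \<noteq> ec col ?D (Suc i mod length ?D)"
      using h[OF m] ecD[OF i'] by simp
  qed (use n d in auto)
qed

lemma revc:
  assumes sg: "simple_graph E" and ecl: "edge_coloring E col" and assms: "alt_cycle E col C"
  shows "alt_cycle E col (rev C)"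
proof -
  let ?n = "length C"
  let ?R = "rev C"
  from assms have n: "?n \<ge> 3" and d: "distinct C" and
    h: "\<And>i. i < ?n \<Longrightarrow> E (C ! i) (C ! (Suc i mod ?n)) \<and> ec col C i \<noteq> ec col C (Suc i mod ?n)"
    unfolding alt_iff by auto
  have n0: "0 < ?n" using n by linarith
  have nm1: "Suc (?n - Suc 0) mod ?n = 0" using n0 by simp
  define j where "j i = (if Suc i < ?n then ?n - 2 - i else ?n - 1)" for i
  have jl: "j i < ?n" for i unfolding j_def using n by auto
  have r1: "?R ! i = C ! (Suc (j i) mod ?n)" if "i < ?n" for i
  proof (cases "Suc i < ?n")
    case True
    then show ?thesis using that unfolding j_def by (auto simp: rev_nth Suc_diff_Suc)
  next
    case False
    then have "Suc i = ?n" using that by simp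
    moreover have "Suc (?n - 1) mod ?n = 0" using n0 by simp
    ultimately show ?thesis unfolding j_def using n0 by (auto simp: rev_nth)
  qed
  have r2: "?R ! (Suc i mod ?n) = C ! (j i)" if "i < ?n" for i
  proof (cases "Suc i < ?n")
    case True
    then show ?thesis unfolding j_def by (auto simp: rev_nth Suc_diff_Suc)
  next
    case False
    then have "Suc i = ?n" using that by simp
    then show ?thesis unfolding j_def using n0 by (auto simp: rev_nth hd_conv_nth)
  qed
  have js: "Suc (j (Suc i mod ?n)) mod ?n = j i" if "i < ?n" for i
  proof (cases "Suc i < ?n")
    case True
    then show ?thesis unfolding j_def using n nm1 by auto
  next
    case False
    then have "Suc i = ?n" using that by simp
    then show ?thesis unfolding j_def using n by auto
  qed
  have eR: "E (?R ! i) (?R ! (Suc i mod ?n))" and ecR: "ec col ?R i = ec col C (j i)" if "i < ?n" for i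
  proof -
    have e: "E (C ! j i) (C ! (Suc (j i) mod ?n))" using h[OF jl] by simp
    then show "E (?R ! i) (?R ! (Suc i mod ?n))" using sg r1[OF that] r2[OF that]
      unfolding simple_graph_def by metis
    have "col (C ! j i) (C ! (Suc (j i) mod ?n)) = col (C ! (Suc (j i) mod ?n)) (C ! j i)"
      using e ecl unfolding edge_coloring_def by blast
    then show "ec col ?R i = ec col C (j i)" using r1[OF that] r2[OF that]
      unfolding ec_def by simp
  qed
  show ?thesis unfolding alt_iff
  proof (intro conjI allI impI)
    fix i assume i: "i < length ?R"
    hence i': "i < ?n" by simp
    have si: "Suc i mod ?n < ?n" using n0 by simp
    show "E (?R ! i) (?R ! (Suc i mod length ?R))" using eR[OF i'] by simp
    have "ec col ?R i = ec col C (Suc (j (Suc i mod ?n)) mod ?n)" using ecR[OF i'] js[OF i'] by simp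
    moreover have "ec col ?R (Suc i mod ?n) = ec col C (j (Suc i mod ?n))" using ecR[OF si] .
    ultimately show "ec col ?R i \<noteq> ec col ?R (Suc i mod length ?R)"
      using h[OF jl[of "Suc i mod ?n"]] by (metis length_rev)
  qed (use n d in auto)
qed

lemma norm0:
  assumes "alt_cycle E col C" "i < length C" "C ! i = v" "C ! (Suc i mod length C) = u"
  shows "\<exists>D. alt_cycle E col D \<and> set D = set C \<and> hd D = u \<and> last D = v"
proof (intro exI conjI)
  let ?n = "length C"
  have n0: "0 < ?n" using assms(2) by linarith
  show "alt_cycle E col (rotate (Suc i) C)" using rot[OF assms(1)] .
  show "set (rotate (Suc i) C) = set C" by simp
  have ne: "rotate (Suc i) C \<noteq> []" using n0 by auto
  have "hd (rotate (Suc i) C) = rotate (Suc i) C ! 0" by (rule hd_conv_nth[OF ne])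
  also have "\<dots> = C ! ((Suc i + 0) mod ?n)" using n0 by (rule nth_rotate)
  finally show "hd (rotate (Suc i) C) = u" using assms(4) by simp
  have "Suc i + (?n - 1) = i + ?n" using n0 by simp
  then have "(Suc i + (?n - 1)) mod ?n = i" using assms(2) by simp
  moreover have "last (rotate (Suc i) C) = rotate (Suc i) C ! (?n - 1)"
    using last_conv_nth[OF ne] by simp
  moreover have "rotate (Suc i) C ! (?n - 1) = C ! ((Suc i + (?n - 1)) mod ?n)"
    using n0 by (intro nth_rotate) simp
  ultimately show "last (rotate (Suc i) C) = v" using assms(3) by simp
qed

lemma norm:
  assumes sg: "simple_graph E" and ecl: "edge_coloring E col" and a: "alt_cycle E col C"
    and nb: "cyc_nbr C v u"
  shows "\<exists>D. alt_cycle E col D \<and> set D = set C \<and> hd D = u \<and> last D = v"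
proof -
  let ?n = "length C"
  obtain i where i: "i < ?n" and
    c: "(C ! i = v \<and> C ! (Suc i mod ?n) = u) \<or> (C ! i = u \<and> C ! (Suc i mod ?n) = v)"
    using nb unfolding cyc_nbr_def by auto
  have n0: "0 < ?n" using i by linarith
  from c show ?thesis
  proof
    assume "C ! i = v \<and> C ! (Suc i mod ?n) = u"
    then show ?thesis using norm0[OF a i] by blast
  next
    assume h: "C ! i = u \<and> C ! (Suc i mod ?n) = v"
    let ?R = "rev C"
    let ?j = "?n - 1 - (Suc i mod ?n)"
    have ar: "alt_cycle E col ?R" using revc[OF sg ecl a] .
    have jl: "?j < length ?R" using n0 by simp
    have k: "Suc i mod ?n < ?n" using n0 by simp
    have "?n - Suc ?j = Suc i mod ?n" using k by linarith
    then have r1: "?R ! ?j = v" using h n0 jl by (simp add: rev_nth)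
    have r2: "?R ! (Suc ?j mod length ?R) = u"
    proof (cases "Suc i < ?n")
      case True
      then have "Suc ?j mod ?n = ?n - Suc i" by simp
      then show ?thesis using h True by (simp add: rev_nth Suc_diff_Suc)
    next
      case False
      then have "Suc i = ?n" using i by simp
      then have "i = ?n - Suc 0" by simp
      then show ?thesis using h n0 by (simp add: rev_nth)
    qed
    obtain D where "alt_cycle E col D \<and> set D = set ?R \<and> hd D = u \<and> last D = v"
      using norm0[OF ar jl r1 r2] by blast
    then show ?thesis by auto
  qed
qed

lemma app:
  assumes a: "alt_cycle E col A" and b: "alt_cycle E col B" and dj: "set A \<inter> set B = {}"
    and ca: "col (last A) (hd A) = c" and cb: "col (last B) (hd B) = c"
    and e1: "E (last A) (hd B)" and c1: "col (last A) (hd B) = c"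
    and e2: "E (last B) (hd A)" and c2: "col (last B) (hd A) = c"
  shows "alt_cycle E col (A @ B)"
proof -
  let ?n1 = "length A" and ?n2 = "length B"
  let ?C = "A @ B"
  let ?n = "?n1 + ?n2"
  from a have n1: "?n1 \<ge> 3" and da: "distinct A" and
    ha: "\<And>i. i < ?n1 \<Longrightarrow> E (A ! i) (A ! (Suc i mod ?n1)) \<and> ec col A i \<noteq> ec col A (Suc i mod ?n1)"
    unfolding alt_iff by auto
  from b have n2: "?n2 \<ge> 3" and db: "distinct B" and
    hb: "\<And>i. i < ?n2 \<Longrightarrow> E (B ! i) (B ! (Suc i mod ?n2)) \<and> ec col B i \<noteq> ec col B (Suc i mod ?n2)"
    unfolding alt_iff by auto
  have A0: "A \<noteq> []" and B0: "B \<noteq> []" using n1 n2 by auto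
  have la: "last A = A ! (?n1 - 1)" and lb: "last B = B ! (?n2 - 1)"
    using A0 B0 by (simp_all add: last_conv_nth)
  have fa: "hd A = A ! 0" and fb: "hd B = B ! 0" using A0 B0 by (simp_all add: hd_conv_nth)
  have "Suc (?n1 - 1) = ?n1" using n1 by simp
  then have ma: "Suc (?n1 - 1) mod ?n1 = 0" by (metis mod_self)
  have "Suc (?n2 - 1) = ?n2" using n2 by simp
  then have mb: "Suc (?n2 - 1) mod ?n2 = 0" by (metis mod_self)
  have eca: "ec col A (?n1 - 1) = c" using ca la fa ma unfolding ec_def by simp
  have ecb: "ec col B (?n2 - 1) = c" using cb lb fb mb unfolding ec_def by simp
  define f where "f i = (if i < ?n1 then ec col A i else ec col B (i - ?n1))" for i
  have key: "E (?C ! i) (?C ! (Suc i mod ?n)) \<and> ec col ?C i = f i" if i: "i < ?n" for i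
  proof -
    consider (a1) "Suc i < ?n1" | (a2) "Suc i = ?n1" | (b1) "?n1 \<le> i" "Suc i < ?n" | (b2) "Suc i = ?n"
      using i by linarith
    then show ?thesis
    proof cases
      case a1
      then show ?thesis using ha[of i] unfolding f_def ec_def by (simp add: nth_append)
    next
      case a2
      have "?n1 < ?n" using B0 by simp
      then have "Suc i mod ?n = ?n1" using a2 by simp
      moreover have "i = ?n1 - 1" using a2 by simp
      ultimately have x: "?C ! i = last A" "?C ! (Suc i mod ?n) = hd B" "i < ?n1"
        using a2 la fb by (auto simp: nth_append)
      have "f i = c" using eca x(3) \<open>i = ?n1 - 1\<close> unfolding f_def by simp
      then show ?thesis using x e1 c1 unfolding ec_def by simp
    next
      case b1
      then have "Suc i - ?n1 = Suc (i - ?n1)" by simp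
      moreover have "i - ?n1 < ?n2" "Suc (i - ?n1) < ?n2" using b1 by auto
      ultimately show ?thesis using b1 hb[of "i - ?n1"] unfolding f_def ec_def
        by (simp add: nth_append)
    next
      case b2
      then have y: "i - ?n1 = ?n2 - 1" "\<not> i < ?n1" "Suc i mod ?n = 0" using n2 by auto
      then have x: "?C ! i = last B" "?C ! (Suc i mod ?n) = hd A"
        using lb fa A0 by (auto simp: nth_append)
      have "f i = c" using ecb y unfolding f_def by simp
      then show ?thesis using x e2 c2 unfolding ec_def by simp
    qed
  qed
  have alt: "f i \<noteq> f (Suc i mod ?n)" if i: "i < ?n" for i
  proof -
    consider (a1) "Suc i < ?n1" | (a2) "Suc i = ?n1" | (b1) "?n1 \<le> i" "Suc i < ?n" | (b2) "Suc i = ?n"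
      using i by linarith
    then show ?thesis
    proof cases
      case a1
      then show ?thesis using ha[of i] unfolding f_def by simp
    next
      case a2
      have "?n1 < ?n" using B0 by simp
      then have "i = ?n1 - 1" "Suc i mod ?n = ?n1" using a2 by auto
      moreover have "ec col B (?n2 - 1) \<noteq> ec col B 0" using hb[of "?n2 - 1"] mb n2 by simp
      ultimately show ?thesis using eca ecb A0 unfolding f_def by simp
    next
      case b1
      then have "Suc i - ?n1 = Suc (i - ?n1)" by simp
      moreover have "i - ?n1 < ?n2" "Suc (i - ?n1) < ?n2" using b1 by auto
      ultimately show ?thesis using b1 hb[of "i - ?n1"] unfolding f_def by simp
    next
      case b2
      then have "i - ?n1 = ?n2 - 1" "\<not> i < ?n1" "Suc i mod ?n = 0" using n2 by auto
      moreover have "ec col A (?n1 - 1) \<noteq> ec col A 0" using ha[of "?n1 - 1"] ma n1 by simp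
      ultimately show ?thesis using eca ecb A0 unfolding f_def by simp
    qed
  qed
  show ?thesis unfolding alt_iff
  proof (intro conjI allI impI)
    fix i assume i: "i < length ?C"
    hence i': "i < ?n" by simp
    have si: "Suc i mod ?n < ?n" using A0 by simp
    show "E (?C ! i) (?C ! (Suc i mod length ?C))" using key[OF i'] by simp
    show "ec col ?C i \<noteq> ec col ?C (Suc i mod length ?C)"
      using key[OF i'] key[OF si] alt[OF i'] by simp
  qed (use n1 da db dj in auto)
qed

lemma nbr_sym: "cyc_nbr C v u \<Longrightarrow> cyc_nbr C u v"
  unfolding cyc_nbr_def by blast

lemma nbr_edge:
  assumes "simple_graph E" "alt_cycle E col C" "cyc_nbr C x y"
  shows "E x y"
proof -
  obtain i where "i < length C" and
    c: "(C ! i = x \<and> C ! (Suc i mod length C) = y) \<or> (C ! i = y \<and> C ! (Suc i mod length C) = x)"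
    using assms(3) unfolding cyc_nbr_def by auto
  then have "E (C ! i) (C ! (Suc i mod length C))" using assms(2) unfolding alt_iff by blast
  then show ?thesis using c assms(1) unfolding simple_graph_def by blast
qed

lemma main_c:
  assumes sg: "simple_graph E" and ecl: "edge_coloring E col"
    and a1: "alt_cycle E col C1" and a2: "alt_cycle E col C2"
    and dj: "set C1 \<inter> set C2 = {}"
    and vw: "E v w" "col v w = c"
    and n1: "cyc_nbr_col col C1 v c vr" and n2: "cyc_nbr_col col C2 w c wr"
    and r: "E vr wr" "col vr wr = c"
  shows "\<exists>C. alt_cycle E col C \<and> set C = set C1 \<union> set C2"
proof -
  from n1 have nb1: "cyc_nbr C1 v vr" and cv: "col v vr = c" unfolding cyc_nbr_col_def by auto
  from n2 have nb2: "cyc_nbr C2 w wr" and cw: "col w wr = c" unfolding cyc_nbr_col_def by auto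
  obtain D1 where D1: "alt_cycle E col D1" "set D1 = set C1" "hd D1 = vr" "last D1 = v"
    using norm[OF sg ecl a1 nb1] by blast
  obtain D2 where D2: "alt_cycle E col D2" "set D2 = set C2" "hd D2 = w" "last D2 = wr"
    using norm[OF sg ecl a2 nbr_sym[OF nb2]] by blast
  have ew: "E w wr" using nbr_edge[OF sg a2 nb2] .
  have cwr: "col wr w = c" using ew cw ecl unfolding edge_coloring_def by metis
  have erv: "E wr vr" using r(1) sg unfolding simple_graph_def by blast
  have crv: "col wr vr = c" using r ecl unfolding edge_coloring_def by metis
  have "alt_cycle E col (D1 @ D2)"
    by (rule app[OF D1(1) D2(1)]) (use dj D1 D2 cv cwr vw erv crv in auto)
  moreover have "set (D1 @ D2) = set C1 \<union> set C2" using D1 D2 by simp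
  ultimately show ?thesis by blast
qed

theorem proposition3p1:
  fixes E :: "'a \<Rightarrow> 'a \<Rightarrow> bool" and col :: "'a \<Rightarrow> 'a \<Rightarrow> color"
    and C1 C2 :: "'a list"
  assumes "simple_graph E" and "edge_coloring E col"
    and "alt_cycle E col C1" and "alt_cycle E col C2"
    and "set C1 \<inter> set C2 = {}"
    and "good_pair E col C1 C2"
  shows "\<exists>C. alt_cycle E col C \<and> set C = set C1 \<union> set C2"
proof -
  from assms(6) obtain v w where vw: "E v w" and
    h: "(col v w = Red \<and> (\<exists>vr wr. cyc_nbr_col col C1 v Red vr \<and> cyc_nbr_col col C2 w Red wr
          \<and> E vr wr \<and> col vr wr = Red)) \<or>
      (col v w = Blue \<and> (\<exists>vb wb. cyc_nbr_col col C1 v Blue vb \<and> cyc_nbr_col col C2 w Blue wb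
          \<and> E vb wb \<and> col vb wb = Blue))"
    unfolding good_pair_def by blast
  from h show ?thesis
    using main_c[OF assms(1-5) vw] by blast
qed

end
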